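(* Let $T$ be a $\delta$-Jordan Lie supertriple system and $(V,\theta)$ a representation of $T$. Then $T\oplus V$, with degree $|(a,u)|=|a|$ and the triple product $$[(a,u),(b,v),(c,w)]=\big([a,b,c],\ (-1)^{|a|(|b|+|c|)}\theta(b,c)(u)-\delta(-1)^{|b||c|}\theta(a,c)(v)+\delta D(a,b)(w)\big),$$ is a $\delta$-Jordan Lie supertriple system.
   Context: A $\delta$-Jordan Lie supertriple system ($\delta\in\{1,-1\}$) is a $\mathbb{Z}_2$-graded vector space $T=T_{\bar 0}\oplus T_{\bar 1}$ with a trilinear product $[\cdot,\cdot,\cdot]$ such that, for all homogeneous $a,b,c,d,e$ (with $|a|$ the degree of $a$): $|[a,b,c]|=|a|+|b|+|c|$; $[b,a,c]=-\delta(-1)^{|a||b|}[a,b,c]$; $(-1)^{|a||c|}[a,b,c]+(-1)^{|b||a|}[b,c,a]+(-1)^{|c||b|}[c,a,b]=0$; and $[a,b,[c,d,e]]=[[a,b,c],d,e]+(-1)^{|c|(|a|+|b|)}[c,[a,b,d],e]+\delta(-1)^{(|a|+|b|)(|c|+|d|)}[c,d,[a,b,e]]$. A representation of $T$ is a pair $(V,\theta)$ where $V$ is a $\mathbb{Z}_2$-graded vector space and $\theta:T\otimes T\to End(V)$ is bilinear such that, writing $D(a,b)=(-1)^{|a||b|}\theta(b,a)-\delta\theta(a,b)$, for all homogeneous $a,b,c,d\in T$: (R1) $(-1)^{(|a|+|b|)(|c|+|d|)}\theta(c,d)\theta(a,b)-\delta(-1)^{|a||b|+|d|(|c|+|a|)}\theta(b,d)\theta(a,c)-\theta(a,[b,c,d])+(-1)^{|a|(|b|+|c|)}D(b,c)\theta(a,d)=0$;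 (R2) $\delta(-1)^{(|a|+|b|)(|c|+|d|)}\theta(c,d)D(a,b)-\delta D(a,b)\theta(c,d)+\theta([a,b,c],d)+\delta(-1)^{|c|(|a|+|b|)}\theta(c,[a,b,d])=0$; (R3) $D([a,b,c],d)+(-1)^{|c|(|a|+|b|)}D(c,[a,b,d])-\delta D(a,b)D(c,d)+(-1)^{(|a|+|b|)(|c|+|d|)}D(c,d)D(a,b)=0$. *)

theory Defs
  imports Complex_Main "HOL-Library.Product_Plus"
begin

text \<open>Degrees are natural numbers read modulo 2.\<close>

definition Gr :: "'a set \<Rightarrow> 'a set \<Rightarrow> nat \<Rightarrow> 'a set" where
  "Gr A0 A1 d = (if even d then A0 else A1)"

definition graded_space :: "('k::field \<Rightarrow> 'a::ab_group_add \<Rightarrow> 'a) \<Rightarrow> 'a set \<Rightarrow> 'a set \<Rightarrow> bool" where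
  "graded_space s A0 A1 \<longleftrightarrow>
     vector_space s \<and> module.subspace s A0 \<and> module.subspace s A1 \<and>
     (\<forall>x. \<exists>!p. fst p \<in> A0 \<and> snd p \<in> A1 \<and> x = fst p + snd p)"

definition gproj :: "'a set \<Rightarrow> 'a set \<Rightarrow> nat \<Rightarrow> 'a::ab_group_add \<Rightarrow> 'a" where
  "gproj A0 A1 i x = (THE y. y \<in> Gr A0 A1 i \<and> x - y \<in> Gr A0 A1 (Suc i))"

definition trilinear :: "('k::field \<Rightarrow> 'a::ab_group_add \<Rightarrow> 'a) \<Rightarrow> ('a \<Rightarrow> 'a \<Rightarrow> 'a \<Rightarrow> 'a) \<Rightarrow> bool" where
  "trilinear s p \<longleftrightarrow>
     (\<forall>b c. Vector_Spaces.linear s s (\<lambda>a. p a b c)) \<and>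
     (\<forall>a c. Vector_Spaces.linear s s (\<lambda>b. p a b c)) \<and>
     (\<forall>a b. Vector_Spaces.linear s s (\<lambda>c. p a b c))"

definition JLSTS :: "('k::field \<Rightarrow> 'a::ab_group_add \<Rightarrow> 'a) \<Rightarrow> 'a set \<Rightarrow> 'a set \<Rightarrow> 'k
    \<Rightarrow> ('a \<Rightarrow> 'a \<Rightarrow> 'a \<Rightarrow> 'a) \<Rightarrow> bool" where
  "JLSTS s A0 A1 \<delta> p \<longleftrightarrow>
     graded_space s A0 A1 \<and> (\<delta> = 1 \<or> \<delta> = -1) \<and> trilinear s p \<and>
     (\<forall>a b c da db dc. a \<in> Gr A0 A1 da \<longrightarrow> b \<in> Gr A0 A1 db \<longrightarrow> c \<in> Gr A0 A1 dc \<longrightarrow>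
        p a b c \<in> Gr A0 A1 (da + db + dc) \<and>
        p b a c = s (- \<delta> * (-1) ^ (da * db)) (p a b c) \<and>
        s ((-1) ^ (da * dc)) (p a b c) + s ((-1) ^ (db * da)) (p b c a)
          + s ((-1) ^ (dc * db)) (p c a b) = 0) \<and>
     (\<forall>a b c d e da db dc dd de. a \<in> Gr A0 A1 da \<longrightarrow> b \<in> Gr A0 A1 db \<longrightarrow>
        c \<in> Gr A0 A1 dc \<longrightarrow> d \<in> Gr A0 A1 dd \<longrightarrow> e \<in> Gr A0 A1 de \<longrightarrow>
        p a b (p c d e) = p (p a b c) d e + s ((-1) ^ (dc * (da + db))) (p c (p a b d) e)
          + s (\<delta> * (-1) ^ ((da + db) * (dc + dd))) (p c d (p a b e)))"

definition Dop :: "('k::field \<Rightarrow> 'v::ab_group_add \<Rightarrow> 'v) \<Rightarrow> 'k \<Rightarrow> ('a \<Rightarrow> 'a \<Rightarrow> 'v \<Rightarrow> 'v)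
    \<Rightarrow> 'a \<Rightarrow> 'a \<Rightarrow> nat \<Rightarrow> nat \<Rightarrow> 'v \<Rightarrow> 'v" where
  "Dop sV \<delta> \<theta> a b da db = (\<lambda>u. sV ((-1) ^ (da * db)) (\<theta> b a u) - sV \<delta> (\<theta> a b u))"

definition jl_representation ::
  "('k::field \<Rightarrow> 'a::ab_group_add \<Rightarrow> 'a) \<Rightarrow> 'a set \<Rightarrow> 'a set \<Rightarrow> 'k \<Rightarrow> ('a \<Rightarrow> 'a \<Rightarrow> 'a \<Rightarrow> 'a)
   \<Rightarrow> ('k \<Rightarrow> 'v::ab_group_add \<Rightarrow> 'v) \<Rightarrow> 'v set \<Rightarrow> 'v set \<Rightarrow> ('a \<Rightarrow> 'a \<Rightarrow> 'v \<Rightarrow> 'v) \<Rightarrow> bool" where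
  "jl_representation s A0 A1 \<delta> p sV V0 V1 \<theta> \<longleftrightarrow>
     graded_space sV V0 V1 \<and>
     (\<forall>b u. Vector_Spaces.linear s sV (\<lambda>a. \<theta> a b u)) \<and>
     (\<forall>a u. Vector_Spaces.linear s sV (\<lambda>b. \<theta> a b u)) \<and>
     (\<forall>a b. Vector_Spaces.linear sV sV (\<theta> a b)) \<and>
     (\<forall>a b u da db du. a \<in> Gr A0 A1 da \<longrightarrow> b \<in> Gr A0 A1 db \<longrightarrow> u \<in> Gr V0 V1 du \<longrightarrow>
        \<theta> a b u \<in> Gr V0 V1 (da + db + du)) \<and>
     (\<forall>a b c d da db dc dd u. a \<in> Gr A0 A1 da \<longrightarrow> b \<in> Gr A0 A1 db \<longrightarrow>
        c \<in> Gr A0 A1 dc \<longrightarrow> d \<in> Gr A0 A1 dd \<longrightarrow>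
        \<comment> \<open>(R1)\<close>
        sV ((-1) ^ ((da + db) * (dc + dd))) (\<theta> c d (\<theta> a b u))
          - sV (\<delta> * (-1) ^ (da * db + dd * (dc + da))) (\<theta> b d (\<theta> a c u))
          - \<theta> a (p b c d) u
          + sV ((-1) ^ (da * (db + dc))) (Dop sV \<delta> \<theta> b c db dc (\<theta> a d u)) = 0 \<and>
        \<comment> \<open>(R2)\<close>
        sV (\<delta> * (-1) ^ ((da + db) * (dc + dd))) (\<theta> c d (Dop sV \<delta> \<theta> a b da db u))
          - sV \<delta> (Dop sV \<delta> \<theta> a b da db (\<theta> c d u))
          + \<theta> (p a b c) d u
          + sV (\<delta> * (-1) ^ (dc * (da + db))) (\<theta> c (p a b d) u) = 0 \<and>
        \<comment> \<open>(R3)\<close>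
        Dop sV \<delta> \<theta> (p a b c) d (da + db + dc) dd u
          + sV ((-1) ^ (dc * (da + db))) (Dop sV \<delta> \<theta> c (p a b d) dc (da + db + dd) u)
          - sV \<delta> (Dop sV \<delta> \<theta> a b da db (Dop sV \<delta> \<theta> c d dc dd u))
          + sV ((-1) ^ ((da + db) * (dc + dd))) (Dop sV \<delta> \<theta> c d dc dd (Dop sV \<delta> \<theta> a b da db u)) = 0)"

definition prod_scale :: "('k \<Rightarrow> 'a \<Rightarrow> 'a) \<Rightarrow> ('k \<Rightarrow> 'v \<Rightarrow> 'v) \<Rightarrow> 'k \<Rightarrow> 'a \<times> 'v \<Rightarrow> 'a \<times> 'v" where
  "prod_scale s sV k x = (s k (fst x), sV k (snd x))"

text \<open>The triple product on homogeneous elements (a,u),(b,v),(c,w) of degrees da, db, dc.\<close>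
definition sd_hom ::
  "('k::field \<Rightarrow> 'v::ab_group_add \<Rightarrow> 'v) \<Rightarrow> 'k \<Rightarrow> ('a \<Rightarrow> 'a \<Rightarrow> 'a \<Rightarrow> 'a) \<Rightarrow> ('a \<Rightarrow> 'a \<Rightarrow> 'v \<Rightarrow> 'v)
   \<Rightarrow> 'a \<times> 'v \<Rightarrow> 'a \<times> 'v \<Rightarrow> 'a \<times> 'v \<Rightarrow> nat \<Rightarrow> nat \<Rightarrow> nat \<Rightarrow> 'a \<times> 'v" where
  "sd_hom sV \<delta> p \<theta> x y z da db dc =
     (case x of (a, u) \<Rightarrow> case y of (b, v) \<Rightarrow> case z of (c, w) \<Rightarrow>
       (p a b c,
        sV ((-1) ^ (da * (db + dc))) (\<theta> b c u)
        - sV (\<delta> * (-1) ^ (db * dc)) (\<theta> a c v)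
        + sV \<delta> (Dop sV \<delta> \<theta> a b da db w)))"

text \<open>Its trilinear extension to all of T \<oplus> V (graded by (T0 \<times> V0, T1 \<times> V1)).\<close>
definition sd_prod ::
  "'a set \<Rightarrow> 'a set \<Rightarrow> ('k::field \<Rightarrow> 'v::ab_group_add \<Rightarrow> 'v) \<Rightarrow> 'v set \<Rightarrow> 'v set \<Rightarrow> 'k
   \<Rightarrow> ('a::ab_group_add \<Rightarrow> 'a \<Rightarrow> 'a \<Rightarrow> 'a) \<Rightarrow> ('a \<Rightarrow> 'a \<Rightarrow> 'v \<Rightarrow> 'v)
   \<Rightarrow> 'a \<times> 'v \<Rightarrow> 'a \<times> 'v \<Rightarrow> 'a \<times> 'v \<Rightarrow> 'a \<times> 'v" where
  "sd_prod A0 A1 sV V0 V1 \<delta> p \<theta> x y z =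
     (\<Sum>i\<in>{0::nat, 1}. \<Sum>j\<in>{0::nat, 1}. \<Sum>k\<in>{0::nat, 1}.
        sd_hom sV \<delta> p \<theta> (gproj (A0 \<times> V0) (A1 \<times> V1) i x) (gproj (A0 \<times> V0) (A1 \<times> V1) j y)
          (gproj (A0 \<times> V0) (A1 \<times> V1) k z) i j k)"

end

theory Submission
  imports Defs
begin


lemma minus_one_pow_if: "((-1::'k::field) ^ n) = (if even n then 1 else -1)"
  by (simp add: minus_one_power_iff)

lemma Gr_Suc_Suc[simp]: "Gr A0 A1 (Suc (Suc i)) = Gr A0 A1 i"
  by (simp add: Gr_def)

lemma gs_vs: "graded_space s A0 A1 \<Longrightarrow> vector_space s"
  by (simp add: graded_space_def)

lemma gs_module: "graded_space s A0 A1 \<Longrightarrow> module s"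
  by (simp add: graded_space_def module_iff_vector_space)

lemma gs_sub: "graded_space s A0 A1 \<Longrightarrow> module.subspace s (Gr A0 A1 i)"
  by (simp add: graded_space_def Gr_def)

lemma gs_inter:
  assumes "graded_space s A0 A1" "x \<in> A0" "x \<in> A1" shows "x = 0"
proof -
  have m: "module s" using assms(1) by (rule gs_module)
  have u: "\<exists>!p. fst p \<in> A0 \<and> snd p \<in> A1 \<and> x = fst p + snd p"
    using assms(1) by (simp add: graded_space_def)
  have "0 \<in> A0" "0 \<in> A1" using assms(1) module.subspace_0[OF m]
    by (auto simp: graded_space_def)
  then have "(x, 0) = (0, x)" using u assms(2,3) by (metis add.right_neutral add_0 fst_conv snd_conv)
  then show ?thesis by simp
qed

lemma gs_inter_Gr:
  assumes "graded_space s A0 A1" "x \<in> Gr A0 A1 i" "x \<in> Gr A0 A1 (Suc i)" shows "x = 0"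
  using assms gs_inter[OF assms(1)] by (cases "even i") (auto simp: Gr_def)

lemma gproj_eq:
  assumes g: "graded_space s A0 A1" and y: "y \<in> Gr A0 A1 i" and xy: "x - y \<in> Gr A0 A1 (Suc i)"
  shows "gproj A0 A1 i x = y"
  unfolding gproj_def
proof (rule the_equality)
  show "y \<in> Gr A0 A1 i \<and> x - y \<in> Gr A0 A1 (Suc i)" using y xy by simp
next
  fix y' assume h: "y' \<in> Gr A0 A1 i \<and> x - y' \<in> Gr A0 A1 (Suc i)"
  have m: "module s" using g by (rule gs_module)
  have "y' - y \<in> Gr A0 A1 i" using h y module.subspace_diff[OF m gs_sub[OF g]] by blast
  moreover have "(x - y) - (x - y') \<in> Gr A0 A1 (Suc i)"
    using h xy module.subspace_diff[OF m gs_sub[OF g]] by blast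
  moreover have "(x - y) - (x - y') = y' - y" by simp
  ultimately have "y' - y = 0" using gs_inter_Gr[OF g] by metis
  then show "y' = y" by simp
qed

lemma gproj_mem:
  assumes g: "graded_space s A0 A1"
  shows "gproj A0 A1 i x \<in> Gr A0 A1 i \<and> x - gproj A0 A1 i x \<in> Gr A0 A1 (Suc i)"
proof -
  obtain q where q: "fst q \<in> A0" "snd q \<in> A1" "x = fst q + snd q"
    using g unfolding graded_space_def by blast
  show ?thesis
  proof (cases "even i")
    case True
    have "gproj A0 A1 i x = fst q" using q True by (intro gproj_eq[OF g]) (auto simp: Gr_def)
    then show ?thesis using q True by (auto simp: Gr_def)
  next
    case False
    have "gproj A0 A1 i x = snd q" using q False by (intro gproj_eq[OF g]) (auto simp: Gr_def)
    then show ?thesis using q False by (auto simp: Gr_def)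
  qed
qed

lemma gproj_add:
  assumes g: "graded_space s A0 A1"
  shows "gproj A0 A1 i (x + y) = gproj A0 A1 i x + gproj A0 A1 i y"
proof (rule gproj_eq[OF g])
  have m: "module s" using g by (rule gs_module)
  note sub = gs_sub[OF g]
  show "gproj A0 A1 i x + gproj A0 A1 i y \<in> Gr A0 A1 i"
    using gproj_mem[OF g] module.subspace_add[OF m sub] by blast
  have "x + y - (gproj A0 A1 i x + gproj A0 A1 i y) = (x - gproj A0 A1 i x) + (y - gproj A0 A1 i y)"
    by simp
  then show "x + y - (gproj A0 A1 i x + gproj A0 A1 i y) \<in> Gr A0 A1 (Suc i)"
    using gproj_mem[OF g] module.subspace_add[OF m sub] by metis
qed

lemma gproj_scale:
  assumes g: "graded_space s A0 A1"
  shows "gproj A0 A1 i (s c x) = s c (gproj A0 A1 i x)"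
proof (rule gproj_eq[OF g])
  have m: "module s" using g by (rule gs_module)
  note sub = gs_sub[OF g]
  show "s c (gproj A0 A1 i x) \<in> Gr A0 A1 i"
    using gproj_mem[OF g] module.subspace_scale[OF m sub] by blast
  have "s c x - s c (gproj A0 A1 i x) = s c (x - gproj A0 A1 i x)"
    by (simp add: module.scale_right_diff_distrib[OF m])
  then show "s c x - s c (gproj A0 A1 i x) \<in> Gr A0 A1 (Suc i)"
    using gproj_mem[OF g] module.subspace_scale[OF m sub] by metis
qed

lemma gproj_hom:
  assumes g: "graded_space s A0 A1" and x: "x \<in> Gr A0 A1 d"
  shows "gproj A0 A1 i x = (if even i = even d then x else 0)"
proof -
  have m: "module s" using g by (rule gs_module)
  have z: "0 \<in> Gr A0 A1 j" for j using module.subspace_0[OF m gs_sub[OF g]] by blast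
  show ?thesis
  proof (cases "even i = even d")
    case True
    then have "Gr A0 A1 i = Gr A0 A1 d" by (simp add: Gr_def)
    then show ?thesis using True x z by (simp add: gproj_eq[OF g])
  next
    case False
    then have "Gr A0 A1 (Suc i) = Gr A0 A1 d" by (simp add: Gr_def)
    then show ?thesis using False x z by (simp add: gproj_eq[OF g])
  qed
qed


lemma Gr_prod: "Gr (A0 \<times> B0) (A1 \<times> B1) d = Gr A0 A1 d \<times> Gr B0 B1 d"
  by (simp add: Gr_def)

lemma prod_vs:
  assumes "vector_space s" "vector_space sV"
  shows "vector_space (prod_scale s sV)"
proof -
  have mA: "module s" and mB: "module sV" using assms by (simp_all add: module_iff_vector_space)
  show ?thesis
    unfolding vector_space_def prod_scale_def
    by (simp add: prod_eq_iff module.scale_right_distrib[OF mA] module.scale_right_distrib[OF mB]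
       module.scale_left_distrib[OF mA] module.scale_left_distrib[OF mB]
       module.scale_scale[OF mA] module.scale_scale[OF mB]
       module.scale_one[OF mA] module.scale_one[OF mB])
qed
lemma ex_dec:
  assumes gA: "graded_space s A0 A1" and gB: "graded_space sV B0 B1"
  shows "\<exists>!q. fst q \<in> A0 \<times> B0 \<and> snd q \<in> A1 \<times> B1 \<and> x = fst q + snd q"
proof -
    obtain a u where x: "x = (a,u)" by (cases x)
    have ua: "\<exists>!q. fst q \<in> A0 \<and> snd q \<in> A1 \<and> a = fst q + snd q" using gA unfolding graded_space_def by blast
    then obtain qa where qa: "fst qa \<in> A0" "snd qa \<in> A1" "a = fst qa + snd qa"
      and qau: "\<And>q. fst q \<in> A0 \<Longrightarrow> snd q \<in> A1 \<Longrightarrow> a = fst q + snd q \<Longrightarrow> q = qa"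
      by (elim ex1E) blast
    have ub: "\<exists>!q. fst q \<in> B0 \<and> snd q \<in> B1 \<and> u = fst q + snd q" using gB unfolding graded_space_def by blast
    then obtain qu where qu: "fst qu \<in> B0" "snd qu \<in> B1" "u = fst qu + snd qu"
      and quu: "\<And>q. fst q \<in> B0 \<Longrightarrow> snd q \<in> B1 \<Longrightarrow> u = fst q + snd q \<Longrightarrow> q = qu"
      by (elim ex1E) blast
    show ?thesis
    proof (rule ex1I[where a="((fst qa, fst qu), (snd qa, snd qu))"])
      show "fst ((fst qa, fst qu), snd qa, snd qu) \<in> A0 \<times> B0 \<and>
        snd ((fst qa, fst qu), snd qa, snd qu) \<in> A1 \<times> B1 \<and>
        x = fst ((fst qa, fst qu), snd qa, snd qu) + snd ((fst qa, fst qu), snd qa, snd qu)"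
        using qa qu x by simp
    next
      fix q assume h: "fst q \<in> A0 \<times> B0 \<and> snd q \<in> A1 \<times> B1 \<and> x = fst q + snd q"
      have h1: "fst (fst q) \<in> A0" "snd (fst q) \<in> B0" "fst (snd q) \<in> A1" "snd (snd q) \<in> B1"
        using h by (simp_all add: mem_Times_iff)
      have h2: "a = fst (fst q) + fst (snd q)" "u = snd (fst q) + snd (snd q)"
        using h x by (simp_all add: prod_eq_iff)
      have 1: "(fst (fst q), fst (snd q)) = qa" by (rule qau) (use h1 h2 in simp_all)
      have 2: "(snd (fst q), snd (snd q)) = qu" by (rule quu) (use h1 h2 in simp_all)
      show "q = ((fst qa, fst qu), snd qa, snd qu)" using 1 2 by (auto simp: prod_eq_iff)
    qed
qed
lemma prod_graded:
  assumes gA: "graded_space s A0 A1" and gB: "graded_space sV B0 B1"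
  shows "graded_space (prod_scale s sV) (A0 \<times> B0) (A1 \<times> B1)"
proof -
  have mA: "module s" by (rule gs_module[OF gA])
  have mB: "module sV" by (rule gs_module[OF gB])
  have vs: "vector_space (prod_scale s sV)" by (rule prod_vs[OF gs_vs[OF gA] gs_vs[OF gB]])
  have mP: "module (prod_scale s sV)" using vs by (simp add: module_iff_vector_space)
  have sub: "module.subspace (prod_scale s sV) (C0 \<times> D0)"
    if "module.subspace s C0" "module.subspace sV D0" for C0 D0
  proof -
    have a: "0 \<in> C0" "\<And>x y. x \<in> C0 \<Longrightarrow> y \<in> C0 \<Longrightarrow> x + y \<in> C0" "\<And>c x. x \<in> C0 \<Longrightarrow> s c x \<in> C0"
      using that(1) unfolding module.subspace_def[OF mA] by blast+
    have b: "0 \<in> D0" "\<And>x y. x \<in> D0 \<Longrightarrow> y \<in> D0 \<Longrightarrow> x + y \<in> D0" "\<And>c x. x \<in> D0 \<Longrightarrow> sV c x \<in> D0"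
      using that(2) unfolding module.subspace_def[OF mB] by blast+
    show ?thesis unfolding module.subspace_def[OF mP]
      using a b by (simp add: prod_scale_def zero_prod_def mem_Times_iff)
  qed
  have ex: "\<exists>!q. fst q \<in> A0 \<times> B0 \<and> snd q \<in> A1 \<times> B1 \<and> x = fst q + snd q" for x
    by (rule ex_dec[OF gA gB])
  have s0: "module.subspace s A0" "module.subspace s A1" using gA by (simp_all add: graded_space_def)
  have s1: "module.subspace sV B0" "module.subspace sV B1" using gB by (simp_all add: graded_space_def)
  show ?thesis
    unfolding graded_space_def using vs ex sub[OF s0(1) s1(1)] sub[OF s0(2) s1(2)] by simp
qed

locale sds =
  fixes s :: "'k::field \<Rightarrow> 'a::ab_group_add \<Rightarrow> 'a" and sV :: "'k \<Rightarrow> 'v::ab_group_add \<Rightarrow> 'v"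
    and p :: "'a \<Rightarrow> 'a \<Rightarrow> 'a \<Rightarrow> 'a" and \<theta> :: "'a \<Rightarrow> 'a \<Rightarrow> 'v \<Rightarrow> 'v"
    and T0 T1 :: "'a set" and V0 V1 :: "'v set" and \<delta> :: 'k
  assumes JL: "JLSTS s T0 T1 \<delta> p" and RP: "jl_representation s T0 T1 \<delta> p sV V0 V1 \<theta>"
begin

lemma gT: "graded_space s T0 T1" using JL by (simp add: JLSTS_def)
lemma gV: "graded_space sV V0 V1" using RP by (simp add: jl_representation_def)
lemma Tm: "module s" using gT by (rule gs_module)
lemma Vm: "module sV" using gV by (rule gs_module)
lemma delta: "\<delta> = 1 \<or> \<delta> = -1" using JL by (simp add: JLSTS_def)
lemma gP: "graded_space (prod_scale s sV) (T0 \<times> V0) (T1 \<times> V1)" by (rule prod_graded[OF gT gV])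
lemma Pm: "module (prod_scale s sV)" using gP by (rule gs_module)

lemma hom_of_lin: "Vector_Spaces.linear s1 s2 f \<Longrightarrow> module_hom s1 s2 f"
  by (simp add: module_hom_iff_linear)

lemma pl1: "module_hom s s (\<lambda>a. p a b c)" using JL unfolding JLSTS_def trilinear_def by (simp add: module_hom_iff_linear)
lemma pl2: "module_hom s s (\<lambda>b. p a b c)" using JL unfolding JLSTS_def trilinear_def by (simp add: module_hom_iff_linear)
lemma pl3: "module_hom s s (\<lambda>c. p a b c)" using JL unfolding JLSTS_def trilinear_def by (simp add: module_hom_iff_linear)
lemma tl1: "module_hom s sV (\<lambda>a. \<theta> a b u)" using RP unfolding jl_representation_def by (simp add: module_hom_iff_linear)
lemma tl2: "module_hom s sV (\<lambda>b. \<theta> a b u)" using RP unfolding jl_representation_def by (simp add: module_hom_iff_linear)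
lemma tl3: "module_hom sV sV (\<theta> a b)" using RP unfolding jl_representation_def by (simp add: module_hom_iff_linear)

lemma p_lin:
  "p (a + a') b c = p a b c + p a' b c" "p (s k a) b c = s k (p a b c)" "p 0 b c = 0"
  "p a (b + b') c = p a b c + p a b' c" "p a (s k b) c = s k (p a b c)" "p a 0 c = 0"
  "p a b (c + c') = p a b c + p a b c'" "p a b (s k c) = s k (p a b c)" "p a b 0 = 0"
  subgoal using module_hom.add[OF pl1[of b c], of a a'] by simp
  subgoal using module_hom.scale[OF pl1[of b c], of k a] by simp
  subgoal using module_hom.zero[OF pl1[of b c]] by simp
  subgoal using module_hom.add[OF pl2[of a c], of b b'] by simp
  subgoal using module_hom.scale[OF pl2[of a c], of k b] by simp
  subgoal using module_hom.zero[OF pl2[of a c]] by simp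
  subgoal using module_hom.add[OF pl3[of a b], of c c'] by simp
  subgoal using module_hom.scale[OF pl3[of a b], of k c] by simp
  subgoal using module_hom.zero[OF pl3[of a b]] by simp
  done

lemma th_lin:
  "\<theta> (a + a') b u = \<theta> a b u + \<theta> a' b u" "\<theta> (s k a) b u = sV k (\<theta> a b u)" "\<theta> 0 b u = 0"
  "\<theta> a (b + b') u = \<theta> a b u + \<theta> a b' u" "\<theta> a (s k b) u = sV k (\<theta> a b u)" "\<theta> a 0 u = 0"
  "\<theta> a b (u + u') = \<theta> a b u + \<theta> a b u'" "\<theta> a b (sV k u) = sV k (\<theta> a b u)" "\<theta> a b 0 = 0"
  "\<theta> a b (- u) = - \<theta> a b u" "\<theta> a b (u - u') = \<theta> a b u - \<theta> a b u'"
  subgoal using module_hom.add[OF tl1[of b u], of a a'] by simp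
  subgoal using module_hom.scale[OF tl1[of b u], of k a] by simp
  subgoal using module_hom.zero[OF tl1[of b u]] by simp
  subgoal using module_hom.add[OF tl2[of a u], of b b'] by simp
  subgoal using module_hom.scale[OF tl2[of a u], of k b] by simp
  subgoal using module_hom.zero[OF tl2[of a u]] by simp
  subgoal using module_hom.add[OF tl3[of a b], of u u'] by simp
  subgoal using module_hom.scale[OF tl3[of a b], of k u] by simp
  subgoal using module_hom.zero[OF tl3[of a b]] by simp
  subgoal using module_hom.neg[OF tl3[of a b], of u] by simp
  subgoal using module_hom.diff[OF tl3[of a b], of u u'] by simp
  done

lemmas Vsc = module.scale_right_distrib[OF Vm] module.scale_right_diff_distrib[OF Vm]
  module.scale_minus_right[OF Vm] module.scale_zero_right[OF Vm] module.scale_scale[OF Vm]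
  module.scale_minus_left[OF Vm] module.scale_one[OF Vm] module.scale_zero_left[OF Vm]
  module.scale_left_diff_distrib[OF Vm] module.scale_left_distrib[OF Vm]

lemmas Tsc = module.scale_right_distrib[OF Tm] module.scale_right_diff_distrib[OF Tm]
  module.scale_minus_right[OF Tm] module.scale_zero_right[OF Tm] module.scale_scale[OF Tm]
  module.scale_minus_left[OF Tm] module.scale_one[OF Tm] module.scale_zero_left[OF Tm]

abbreviation "H \<equiv> sd_hom sV \<delta> p \<theta>"
abbreviation "PS \<equiv> prod_scale s sV"

end

context sds begin
lemma H_add1: "H (X + X') Y Z i j k = H X Y Z i j k + H X' Y Z i j k"
  by (cases X; cases X'; cases Y; cases Z)
     (simp add: sd_hom_def Dop_def p_lin th_lin Vsc algebra_simps)
lemma H_add2: "H X (Y + Y') Z i j k = H X Y Z i j k + H X Y' Z i j k"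
  by (cases X; cases Y'; cases Y; cases Z)
     (simp add: sd_hom_def Dop_def p_lin th_lin Vsc algebra_simps)
lemma H_add3: "H X Y (Z + Z') i j k = H X Y Z i j k + H X Y Z' i j k"
  by (cases X; cases Z'; cases Y; cases Z)
     (simp add: sd_hom_def Dop_def p_lin th_lin Vsc algebra_simps)
lemma H_scale1: "H (PS c X) Y Z i j k = PS c (H X Y Z i j k)"
  by (cases X; cases Y; cases Z)
     (simp add: sd_hom_def Dop_def prod_scale_def p_lin th_lin Vsc algebra_simps)
lemma H_scale2: "H X (PS c Y) Z i j k = PS c (H X Y Z i j k)"
  by (cases X; cases Y; cases Z)
     (simp add: sd_hom_def Dop_def prod_scale_def p_lin th_lin Vsc algebra_simps)
lemma H_scale3: "H X Y (PS c Z) i j k = PS c (H X Y Z i j k)"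
  by (cases X; cases Y; cases Z)
     (simp add: sd_hom_def Dop_def prod_scale_def p_lin th_lin Vsc algebra_simps)

end


lemma Gr_cong: "even i = even j \<Longrightarrow> Gr A0 A1 i = Gr A0 A1 j"
  by (simp add: Gr_def)

context sds
begin

abbreviation "SP \<equiv> sd_prod T0 T1 sV V0 V1 \<delta> p \<theta>"

lemma H_zero:
  "H 0 Y Z i j k = 0" "H X 0 Z i j k = 0" "H X Y 0 i j k = 0"
  by (cases X; cases Y; cases Z; simp add: sd_hom_def Dop_def p_lin th_lin Vsc zero_prod_def)+

lemma H_par:
  assumes "even i = even i'" "even j = even j'" "even k = even k'"
  shows "H X Y Z i j k = H X Y Z i' j' k'"
  using assms
  by (cases X; cases Y; cases Z; cases "even i"; cases "even j"; cases "even k")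
     (simp_all add: sd_hom_def Dop_def minus_one_pow_if)

lemma SP_hom:
  assumes X: "X \<in> Gr (T0 \<times> V0) (T1 \<times> V1) dx" and Y: "Y \<in> Gr (T0 \<times> V0) (T1 \<times> V1) dy"
    and Z: "Z \<in> Gr (T0 \<times> V0) (T1 \<times> V1) dz"
  shows "SP X Y Z = H X Y Z dx dy dz"
proof -
  have gx: "\<And>i. gproj (T0 \<times> V0) (T1 \<times> V1) i X = (if even i = even dx then X else 0)"
    using gproj_hom[OF gP X] by blast
  have gy: "\<And>i. gproj (T0 \<times> V0) (T1 \<times> V1) i Y = (if even i = even dy then Y else 0)"
    using gproj_hom[OF gP Y] by blast
  have gz: "\<And>i. gproj (T0 \<times> V0) (T1 \<times> V1) i Z = (if even i = even dz then Z else 0)"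
    using gproj_hom[OF gP Z] by blast
  have "SP X Y Z = H X Y Z (if even dx then 0 else 1) (if even dy then 0 else 1) (if even dz then 0 else 1)"
    unfolding sd_prod_def gx gy gz
    by (cases "even dx"; cases "even dy"; cases "even dz") (simp_all add: H_zero)
  also have "\<dots> = H X Y Z dx dy dz" by (rule H_par) auto
  finally show ?thesis .
qed

lemma SP_lin1: "Vector_Spaces.linear PS PS (\<lambda>X. SP X Y Z)"
  unfolding Vector_Spaces.linear_iff
  using gs_vs[OF gP]
  by (simp add: sd_prod_def gproj_add[OF gP] gproj_scale[OF gP] H_add1 H_scale1 sum.distrib
      module.scale_sum_right[OF Pm] module.scale_right_distrib[OF Pm])
lemma SP_lin2: "Vector_Spaces.linear PS PS (\<lambda>Y. SP X Y Z)"
  unfolding Vector_Spaces.linear_iff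
  using gs_vs[OF gP]
  by (simp add: sd_prod_def gproj_add[OF gP] gproj_scale[OF gP] H_add2 H_scale2 sum.distrib
      module.scale_sum_right[OF Pm] module.scale_right_distrib[OF Pm])
lemma SP_lin3: "Vector_Spaces.linear PS PS (\<lambda>Z. SP X Y Z)"
  unfolding Vector_Spaces.linear_iff
  using gs_vs[OF gP]
  by (simp add: sd_prod_def gproj_add[OF gP] gproj_scale[OF gP] H_add3 H_scale3 sum.distrib
      module.scale_sum_right[OF Pm] module.scale_right_distrib[OF Pm])

lemma th_deg: "a \<in> Gr T0 T1 da \<Longrightarrow> b \<in> Gr T0 T1 db \<Longrightarrow> u \<in> Gr V0 V1 du \<Longrightarrow>
    \<theta> a b u \<in> Gr V0 V1 (da + db + du)"
  using RP unfolding jl_representation_def by blast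

lemma RR:
  assumes "a \<in> Gr T0 T1 da" "b \<in> Gr T0 T1 db" "c \<in> Gr T0 T1 dc" "d \<in> Gr T0 T1 dd"
  shows
  "sV ((-1) ^ ((da + db) * (dc + dd))) (\<theta> c d (\<theta> a b u))
          - sV (\<delta> * (-1) ^ (da * db + dd * (dc + da))) (\<theta> b d (\<theta> a c u))
          - \<theta> a (p b c d) u
          + sV ((-1) ^ (da * (db + dc))) (Dop sV \<delta> \<theta> b c db dc (\<theta> a d u)) = 0"
  "sV (\<delta> * (-1) ^ ((da + db) * (dc + dd))) (\<theta> c d (Dop sV \<delta> \<theta> a b da db u))
          - sV \<delta> (Dop sV \<delta> \<theta> a b da db (\<theta> c d u))
          + \<theta> (p a b c) d u
          + sV (\<delta> * (-1) ^ (dc * (da + db))) (\<theta> c (p a b d) u) = 0"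
  "Dop sV \<delta> \<theta> (p a b c) d (da + db + dc) dd u
          + sV ((-1) ^ (dc * (da + db))) (Dop sV \<delta> \<theta> c (p a b d) dc (da + db + dd) u)
          - sV \<delta> (Dop sV \<delta> \<theta> a b da db (Dop sV \<delta> \<theta> c d dc dd u))
          + sV ((-1) ^ ((da + db) * (dc + dd))) (Dop sV \<delta> \<theta> c d dc dd (Dop sV \<delta> \<theta> a b da db u)) = 0"
  using RP assms unfolding jl_representation_def by blast+

lemma p_ax:
  assumes "a \<in> Gr T0 T1 da" "b \<in> Gr T0 T1 db" "c \<in> Gr T0 T1 dc"
  shows "p a b c \<in> Gr T0 T1 (da + db + dc)"
    "p b a c = s (- \<delta> * (-1) ^ (da * db)) (p a b c)"
    "s ((-1) ^ (da * dc)) (p a b c) + s ((-1) ^ (db * da)) (p b c a)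
          + s ((-1) ^ (dc * db)) (p c a b) = 0"
  using JL assms unfolding JLSTS_def by blast+

lemma p_fund:
  assumes "a \<in> Gr T0 T1 da" "b \<in> Gr T0 T1 db" "c \<in> Gr T0 T1 dc" "d \<in> Gr T0 T1 dd" "e \<in> Gr T0 T1 de"
  shows "p a b (p c d e) = p (p a b c) d e + s ((-1) ^ (dc * (da + db))) (p c (p a b d) e)
          + s (\<delta> * (-1) ^ ((da + db) * (dc + dd))) (p c d (p a b e))"
  using JL assms unfolding JLSTS_def by blast

lemma Dop_lin:
  "Dop sV \<delta> \<theta> a b da db (u + u') = Dop sV \<delta> \<theta> a b da db u + Dop sV \<delta> \<theta> a b da db u'"
  "Dop sV \<delta> \<theta> a b da db (u - u') = Dop sV \<delta> \<theta> a b da db u - Dop sV \<delta> \<theta> a b da db u'"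
  "Dop sV \<delta> \<theta> a b da db (- u) = - Dop sV \<delta> \<theta> a b da db u"
  "Dop sV \<delta> \<theta> a b da db (sV k u) = sV k (Dop sV \<delta> \<theta> a b da db u)"
  "Dop sV \<delta> \<theta> a b da db 0 = 0"
  by (simp_all add: Dop_def th_lin Vsc algebra_simps)

lemma V_sub: "module.subspace sV (Gr V0 V1 i)" by (rule gs_sub[OF gV])

lemma V_closed:
  "x \<in> Gr V0 V1 i \<Longrightarrow> y \<in> Gr V0 V1 i \<Longrightarrow> x + y \<in> Gr V0 V1 i"
  "x \<in> Gr V0 V1 i \<Longrightarrow> y \<in> Gr V0 V1 i \<Longrightarrow> x - y \<in> Gr V0 V1 i"
  "x \<in> Gr V0 V1 i \<Longrightarrow> sV k x \<in> Gr V0 V1 i"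
  using module.subspace_add[OF Vm V_sub] module.subspace_diff[OF Vm V_sub]
    module.subspace_scale[OF Vm V_sub] by blast+

lemma th_deg':
  assumes "a \<in> Gr T0 T1 da" "b \<in> Gr T0 T1 db" "u \<in> Gr V0 V1 du" "even (da + db + du) = even n"
  shows "\<theta> a b u \<in> Gr V0 V1 n"
  using th_deg[OF assms(1-3)] Gr_cong[OF assms(4), of V0 V1] by simp

lemma H_deg:
  assumes "a \<in> Gr T0 T1 da" "b \<in> Gr T0 T1 db" "c \<in> Gr T0 T1 dc"
    "u \<in> Gr V0 V1 da" "v \<in> Gr V0 V1 db" "w \<in> Gr V0 V1 dc"
  shows "H (a,u) (b,v) (c,w) da db dc \<in> Gr (T0 \<times> V0) (T1 \<times> V1) (da + db + dc)"
proof -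
  have "\<theta> b c u \<in> Gr V0 V1 (da + db + dc)" by (rule th_deg'[OF assms(2,3,4)]) (cases "even da"; cases "even db"; cases "even dc"; simp)
  moreover have "\<theta> a c v \<in> Gr V0 V1 (da + db + dc)" by (rule th_deg'[OF assms(1,3,5)]) (cases "even da"; cases "even db"; cases "even dc"; simp)
  moreover have "\<theta> b a w \<in> Gr V0 V1 (da + db + dc)" by (rule th_deg'[OF assms(2,1,6)]) (cases "even da"; cases "even db"; cases "even dc"; simp)
  moreover have "\<theta> a b w \<in> Gr V0 V1 (da + db + dc)" by (rule th_deg'[OF assms(1,2,6)]) (cases "even da"; cases "even db"; cases "even dc"; simp)
  ultimately
  show ?thesis using p_ax(1)[OF assms(1-3)]
    by (simp add: Gr_prod sd_hom_def Dop_def V_closed)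
qed

end


lemma solve1: "A - B - X + C = (0::'a::ab_group_add) \<Longrightarrow> X = A - B + C"
  by (simp add: algebra_simps eq_neg_iff_add_eq_0 add_eq_0_iff)
lemma solve2: "A - B + X + C = (0::'a::ab_group_add) \<Longrightarrow> X = B - A - C"
  by (simp add: algebra_simps eq_neg_iff_add_eq_0 add_eq_0_iff)
lemma solve3: "X + A - B + C = (0::'a::ab_group_add) \<Longrightarrow> X = B - A - C"
  by (simp add: algebra_simps eq_neg_iff_add_eq_0 add_eq_0_iff)

context sds
begin

lemma skewV:
  "snd (H (b,v) (a,u) (c,w) db da dc) = snd (PS (- \<delta> * (-1) ^ (da * db)) (H (a,u) (b,v) (c,w) da db dc))"
  using delta
  by (elim disjE; cases "even da"; cases "even db"; cases "even dc")
     (simp_all add: sd_hom_def Dop_def prod_scale_def minus_one_pow_if Vsc th_lin algebra_simps)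

lemma cycV:
  "snd (PS ((-1) ^ (da * dc)) (H (a,u) (b,v) (c,w) da db dc) + PS ((-1) ^ (db * da)) (H (b,v) (c,w) (a,u) db dc da)
     + PS ((-1) ^ (dc * db)) (H (c,w) (a,u) (b,v) dc da db)) = 0"
  using delta
  by (elim disjE; cases "even da"; cases "even db"; cases "even dc")
     (simp_all add: sd_hom_def Dop_def prod_scale_def minus_one_pow_if Vsc th_lin algebra_simps)

end


context sds
begin

lemma dd1: "\<delta> * \<delta> = 1" using delta by auto
lemma dd2: "\<delta> * (\<delta> * k) = k" using delta by auto

lemma fundV:
  assumes a: "a \<in> Gr T0 T1 da" and b: "b \<in> Gr T0 T1 db" and c: "c \<in> Gr T0 T1 dc"
    and d: "d \<in> Gr T0 T1 dd" and e: "e \<in> Gr T0 T1 de"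
  shows "snd (H (a,u) (b,v) (H (c,w) (d,x) (e,y) dc dd de) da db (dc + dd + de)) =
    snd (H (H (a,u) (b,v) (c,w) da db dc) (d,x) (e,y) (da + db + dc) dd de
      + PS ((-1) ^ (dc * (da + db))) (H (c,w) (H (a,u) (b,v) (d,x) da db dd) (e,y) dc (da + db + dd) de)
      + PS (\<delta> * (-1) ^ ((da + db) * (dc + dd))) (H (c,w) (d,x) (H (a,u) (b,v) (e,y) da db de) dc dd (da + db + de)))"
proof -
  note E1 = solve1[OF RR(1)[OF b c d e, of u]]
  note E2 = solve1[OF RR(1)[OF a c d e, of v]]
  note E3 = solve2[OF RR(2)[OF a b d e, of w]]
  note E4 = solve2[OF RR(2)[OF a b c e, of x]]
  note E5 = solve3[OF RR(3)[OF a b c d, of y]]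
  show ?thesis
    by (cases "even da"; cases "even db"; cases "even dc"; cases "even dd"; cases "even de";
        simp add: sd_hom_def prod_scale_def minus_one_pow_if Vsc th_lin Dop_lin dd1 dd2 E1 E2 E3 E4 E5;
        simp add: algebra_simps)
qed

end


context sds
begin

lemma Gr_P: "X \<in> Gr (T0 \<times> V0) (T1 \<times> V1) d \<longleftrightarrow> fst X \<in> Gr T0 T1 d \<and> snd X \<in> Gr V0 V1 d"
  by (simp add: Gr_prod mem_Times_iff)

lemma three:
  assumes X: "X \<in> Gr (T0 \<times> V0) (T1 \<times> V1) da" and Y: "Y \<in> Gr (T0 \<times> V0) (T1 \<times> V1) db"
    and Z: "Z \<in> Gr (T0 \<times> V0) (T1 \<times> V1) dc"
  shows "SP X Y Z \<in> Gr (T0 \<times> V0) (T1 \<times> V1) (da + db + dc) \<and>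
    SP Y X Z = PS (- \<delta> * (-1) ^ (da * db)) (SP X Y Z) \<and>
    PS ((-1) ^ (da * dc)) (SP X Y Z) + PS ((-1) ^ (db * da)) (SP Y Z X)
      + PS ((-1) ^ (dc * db)) (SP Z X Y) = 0"
proof -
  obtain a u where Xe: "X = (a,u)" by (cases X)
  obtain b v where Ye: "Y = (b,v)" by (cases Y)
  obtain c w where Ze: "Z = (c,w)" by (cases Z)
  have m: "a \<in> Gr T0 T1 da" "u \<in> Gr V0 V1 da" "b \<in> Gr T0 T1 db" "v \<in> Gr V0 V1 db"
    "c \<in> Gr T0 T1 dc" "w \<in> Gr V0 V1 dc"
    using X Y Z Xe Ye Ze Gr_P by auto
  have s1: "SP X Y Z = H (a,u) (b,v) (c,w) da db dc" using SP_hom[OF X Y Z] Xe Ye Ze by simp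
  have s2: "SP Y X Z = H (b,v) (a,u) (c,w) db da dc" using SP_hom[OF Y X Z] Xe Ye Ze by simp
  have s3: "SP Y Z X = H (b,v) (c,w) (a,u) db dc da" using SP_hom[OF Y Z X] Xe Ye Ze by simp
  have s4: "SP Z X Y = H (c,w) (a,u) (b,v) dc da db" using SP_hom[OF Z X Y] Xe Ye Ze by simp
  have deg: "SP X Y Z \<in> Gr (T0 \<times> V0) (T1 \<times> V1) (da + db + dc)"
    unfolding s1 by (rule H_deg[OF m(1,3,5,2,4,6)])
  have skew: "SP Y X Z = PS (- \<delta> * (-1) ^ (da * db)) (SP X Y Z)"
    unfolding s1 s2
  proof (rule prod_eqI)
    show "fst (H (b, v) (a, u) (c, w) db da dc) = fst (PS (- \<delta> * (- 1) ^ (da * db)) (H (a, u) (b, v) (c, w) da db dc))"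
      using p_ax(2)[OF m(1,3,5)] by (simp add: sd_hom_def prod_scale_def)
    show "snd (H (b, v) (a, u) (c, w) db da dc) = snd (PS (- \<delta> * (- 1) ^ (da * db)) (H (a, u) (b, v) (c, w) da db dc))"
      by (rule skewV)
  qed
  have cyc: "PS ((-1) ^ (da * dc)) (SP X Y Z) + PS ((-1) ^ (db * da)) (SP Y Z X)
      + PS ((-1) ^ (dc * db)) (SP Z X Y) = 0"
    unfolding s1 s3 s4
  proof (rule prod_eqI)
    show "fst (PS ((- 1) ^ (da * dc)) (H (a, u) (b, v) (c, w) da db dc) +
        PS ((- 1) ^ (db * da)) (H (b, v) (c, w) (a, u) db dc da) +
        PS ((- 1) ^ (dc * db)) (H (c, w) (a, u) (b, v) dc da db)) = fst 0"
      using p_ax(3)[OF m(1,3,5)] by (simp add: sd_hom_def prod_scale_def)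
    show "snd (PS ((- 1) ^ (da * dc)) (H (a, u) (b, v) (c, w) da db dc) +
        PS ((- 1) ^ (db * da)) (H (b, v) (c, w) (a, u) db dc da) +
        PS ((- 1) ^ (dc * db)) (H (c, w) (a, u) (b, v) dc da db)) = snd 0"
      using cycV by simp
  qed
  show ?thesis using deg skew cyc by blast
qed

lemma fund:
  assumes X1: "X1 \<in> Gr (T0 \<times> V0) (T1 \<times> V1) da" and X2: "X2 \<in> Gr (T0 \<times> V0) (T1 \<times> V1) db"
    and X3: "X3 \<in> Gr (T0 \<times> V0) (T1 \<times> V1) dc" and X4: "X4 \<in> Gr (T0 \<times> V0) (T1 \<times> V1) dd"
    and X5: "X5 \<in> Gr (T0 \<times> V0) (T1 \<times> V1) de"
  shows "SP X1 X2 (SP X3 X4 X5) = SP (SP X1 X2 X3) X4 X5 + PS ((-1) ^ (dc * (da + db))) (SP X3 (SP X1 X2 X4) X5)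
          + PS (\<delta> * (-1) ^ ((da + db) * (dc + dd))) (SP X3 X4 (SP X1 X2 X5))"
proof -
  obtain a u where Xe1: "X1 = (a,u)" by (cases X1)
  obtain b v where Xe2: "X2 = (b,v)" by (cases X2)
  obtain c w where Xe3: "X3 = (c,w)" by (cases X3)
  obtain d x where Xe4: "X4 = (d,x)" by (cases X4)
  obtain e y where Xe5: "X5 = (e,y)" by (cases X5)
  have m: "a \<in> Gr T0 T1 da" "u \<in> Gr V0 V1 da" "b \<in> Gr T0 T1 db" "v \<in> Gr V0 V1 db"
    "c \<in> Gr T0 T1 dc" "w \<in> Gr V0 V1 dc" "d \<in> Gr T0 T1 dd" "x \<in> Gr V0 V1 dd"
    "e \<in> Gr T0 T1 de" "y \<in> Gr V0 V1 de"
    using X1 X2 X3 X4 X5 Xe1 Xe2 Xe3 Xe4 Xe5 Gr_P by auto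
  have i1: "SP X3 X4 X5 = H (c,w) (d,x) (e,y) dc dd de" using SP_hom[OF X3 X4 X5] Xe3 Xe4 Xe5 by simp
  have i2: "SP X1 X2 X3 = H (a,u) (b,v) (c,w) da db dc" using SP_hom[OF X1 X2 X3] Xe1 Xe2 Xe3 by simp
  have i3: "SP X1 X2 X4 = H (a,u) (b,v) (d,x) da db dd" using SP_hom[OF X1 X2 X4] Xe1 Xe2 Xe4 by simp
  have i4: "SP X1 X2 X5 = H (a,u) (b,v) (e,y) da db de" using SP_hom[OF X1 X2 X5] Xe1 Xe2 Xe5 by simp
  have g1: "SP X3 X4 X5 \<in> Gr (T0 \<times> V0) (T1 \<times> V1) (dc + dd + de)"
    using three[OF X3 X4 X5] by blast
  have g2: "SP X1 X2 X3 \<in> Gr (T0 \<times> V0) (T1 \<times> V1) (da + db + dc)"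
    using three[OF X1 X2 X3] by blast
  have g3: "SP X1 X2 X4 \<in> Gr (T0 \<times> V0) (T1 \<times> V1) (da + db + dd)"
    using three[OF X1 X2 X4] by blast
  have g4: "SP X1 X2 X5 \<in> Gr (T0 \<times> V0) (T1 \<times> V1) (da + db + de)"
    using three[OF X1 X2 X5] by blast
  have o1: "SP X1 X2 (SP X3 X4 X5) = H X1 X2 (SP X3 X4 X5) da db (dc + dd + de)"
    by (rule SP_hom[OF X1 X2 g1])
  have o2: "SP (SP X1 X2 X3) X4 X5 = H (SP X1 X2 X3) X4 X5 (da + db + dc) dd de"
    by (rule SP_hom[OF g2 X4 X5])
  have o3: "SP X3 (SP X1 X2 X4) X5 = H X3 (SP X1 X2 X4) X5 dc (da + db + dd) de"
    by (rule SP_hom[OF X3 g3 X5])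
  have o4: "SP X3 X4 (SP X1 X2 X5) = H X3 X4 (SP X1 X2 X5) dc dd (da + db + de)"
    by (rule SP_hom[OF X3 X4 g4])
  show ?thesis
    unfolding o1 o2 o3 o4 unfolding i1 i2 i3 i4 unfolding Xe1 Xe2 Xe3 Xe4 Xe5
  proof (rule prod_eqI)
    show "fst (H (a, u) (b, v) (H (c, w) (d, x) (e, y) dc dd de) da db (dc + dd + de)) =
      fst (H (H (a, u) (b, v) (c, w) da db dc) (d, x) (e, y) (da + db + dc) dd de +
       PS ((- 1) ^ (dc * (da + db))) (H (c, w) (H (a, u) (b, v) (d, x) da db dd) (e, y) dc (da + db + dd) de) +
       PS (\<delta> * (- 1) ^ ((da + db) * (dc + dd))) (H (c, w) (d, x) (H (a, u) (b, v) (e, y) da db de) dc dd (da + db + de)))"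
      using p_fund[OF m(1,3,5,7,9)] by (simp add: sd_hom_def prod_scale_def)
    show "snd (H (a, u) (b, v) (H (c, w) (d, x) (e, y) dc dd de) da db (dc + dd + de)) =
      snd (H (H (a, u) (b, v) (c, w) da db dc) (d, x) (e, y) (da + db + dc) dd de +
       PS ((- 1) ^ (dc * (da + db))) (H (c, w) (H (a, u) (b, v) (d, x) da db dd) (e, y) dc (da + db + dd) de) +
       PS (\<delta> * (- 1) ^ ((da + db) * (dc + dd))) (H (c, w) (d, x) (H (a, u) (b, v) (e, y) da db de) dc dd (da + db + de)))"
      by (rule fundV[OF m(1,3,5,7,9)])
  qed
qed

theorem main: "JLSTS PS (T0 \<times> V0) (T1 \<times> V1) \<delta> SP"
proof -
  have A: "\<forall>a b c da db dc. a \<in> Gr (T0 \<times> V0) (T1 \<times> V1) da \<longrightarrow>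
         b \<in> Gr (T0 \<times> V0) (T1 \<times> V1) db \<longrightarrow> c \<in> Gr (T0 \<times> V0) (T1 \<times> V1) dc \<longrightarrow>
         SP a b c \<in> Gr (T0 \<times> V0) (T1 \<times> V1) (da + db + dc) \<and>
         SP b a c = PS (- \<delta> * (- 1) ^ (da * db)) (SP a b c) \<and>
         PS ((- 1) ^ (da * dc)) (SP a b c) + PS ((- 1) ^ (db * da)) (SP b c a) +
         PS ((- 1) ^ (dc * db)) (SP c a b) = 0"
    using three by blast
  have B: "\<forall>a b c d e da db dc dd de. a \<in> Gr (T0 \<times> V0) (T1 \<times> V1) da \<longrightarrow>
         b \<in> Gr (T0 \<times> V0) (T1 \<times> V1) db \<longrightarrow> c \<in> Gr (T0 \<times> V0) (T1 \<times> V1) dc \<longrightarrow>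
         d \<in> Gr (T0 \<times> V0) (T1 \<times> V1) dd \<longrightarrow> e \<in> Gr (T0 \<times> V0) (T1 \<times> V1) de \<longrightarrow>
         SP a b (SP c d e) = SP (SP a b c) d e + PS ((- 1) ^ (dc * (da + db))) (SP c (SP a b d) e) +
         PS (\<delta> * (- 1) ^ ((da + db) * (dc + dd))) (SP c d (SP a b e))"
    using fund by blast
  have C: "trilinear PS SP"
    unfolding trilinear_def using SP_lin1 SP_lin2 SP_lin3 by blast
  show ?thesis unfolding JLSTS_def using gP delta A B C by blast
qed

end

theorem proposition3p3:
  fixes s :: "'k::field \<Rightarrow> 'a::ab_group_add \<Rightarrow> 'a"
    and sV :: "'k \<Rightarrow> 'v::ab_group_add \<Rightarrow> 'v"
    and p :: "'a \<Rightarrow> 'a \<Rightarrow> 'a \<Rightarrow> 'a"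
    and \<theta> :: "'a \<Rightarrow> 'a \<Rightarrow> 'v \<Rightarrow> 'v"
  assumes "JLSTS s T0 T1 \<delta> p"
    and "jl_representation s T0 T1 \<delta> p sV V0 V1 \<theta>"
  shows "JLSTS (prod_scale s sV) (T0 \<times> V0) (T1 \<times> V1) \<delta> (sd_prod T0 T1 sV V0 V1 \<delta> p \<theta>)"
proof -
  interpret sds s sV p \<theta> T0 T1 V0 V1 \<delta> using assms by unfold_locales
  show ?thesis by (rule main)
qed

end
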